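(* Let $A\in\mathcal M(m;\mathbb C)$ and let $\mathcal G_A$ be the set of limit points of the sequence $(A^n)_{n\in\mathbb N}$ (i.e. limits of convergent subsequences). If $\mathcal G_A$ is nonempty, then $\mathcal G_A$ is an abelian compact group under matrix multiplication. *)

theory Defs
  imports "HOL-Analysis.Analysis" "HOL-Algebra.Group"
begin

primrec matpow :: "'a::semiring_1^'n^'n \<Rightarrow> nat \<Rightarrow> 'a^'n^'n" where
  "matpow A 0 = mat 1"
| "matpow A (Suc k) = matpow A k ** A"

definition limit_points_pow :: "complex^'n^'n \<Rightarrow> (complex^'n^'n) set" where
  "limit_points_pow A = {L. \<exists>r. strict_mono r \<and> (\<lambda>k. matpow A (r k)) \<longlonglongrightarrow> L}"

end

theory Submission
  imports Defs Jordan_Normal_Form.Spectral_Radius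
begin


lemma diag_block_entry:
  assumes "B \<in> set As" "i < dim_row B" "j < dim_col B"
  shows "\<exists>i' j'. i' < dim_row (diag_block_mat As) \<and> j' < dim_col (diag_block_mat As) \<and>
     diag_block_mat As $$ (i',j') = B $$ (i,j)"
  using assms
proof (induct As arbitrary: i j)
  case Nil then show ?case by simp
next
  case (Cons A As)
  let ?D = "diag_block_mat As"
  show ?case
  proof (cases "B = A")
    case True
    with Cons.prems show ?thesis
      by (intro exI[of _ i] exI[of _ j]) (simp add: Let_def)
  next
    case False
    with Cons.prems have "B \<in> set As" by simp
    from Cons.hyps[OF this Cons.prems(2,3)] obtain i' j' where
      ij: "i' < dim_row ?D" "j' < dim_col ?D" "?D $$ (i',j') = B $$ (i,j)" by blast
    show ?thesis using ij
      by (intro exI[of _ "i' + dim_row A"] exI[of _ "j' + dim_col A"]) (simp add: Let_def)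
  qed
qed

lemma norm_bound_entry: "norm_bound M c \<Longrightarrow> i < dim_row M \<Longrightarrow> j < dim_col M \<Longrightarrow> norm (M $$ (i,j)) \<le> c"
  unfolding norm_bound_def by blast

lemma jnf_pow_bounded:
  fixes A :: "complex mat" and r :: "nat \<Rightarrow> nat"
  assumes A: "A \<in> carrier_mat n n" and r: "strict_mono r" and b: "\<And>k. norm_bound (A ^\<^sub>m r k) C"
  shows "\<exists>c. \<forall>k. norm_bound (A ^\<^sub>m k) c"
proof -
  from char_poly_factorized[OF A] obtain as where "char_poly A = (\<Prod> a \<leftarrow> as. [:- a, 1:])" by blast
  from jordan_nf_exists[OF A this] obtain n_as where jnf: "jordan_nf A n_as" by blast
  let ?J = "jordan_matrix n_as"
  from jnf[unfolded jordan_nf_def] obtain P Q where sim: "similar_mat_wit A ?J P Q"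
    unfolding similar_mat_def by blast
  from sim A have J: "?J \<in> carrier_mat n n" and P: "P \<in> carrier_mat n n" and Q: "Q \<in> carrier_mat n n"
    unfolding similar_mat_wit_def Let_def carrier_mat_def by force+
  have Jpow: "?J ^\<^sub>m k = Q * A ^\<^sub>m k * P" for k
    by (rule similar_mat_wit_pow_id[OF similar_mat_wit_sym[OF sim]])
  obtain bP where bP: "norm_bound P bP" using norm_bound_max[of P] by auto
  obtain bQ where bQ: "norm_bound Q bQ" using norm_bound_max[of Q] by auto
  define C' where "C' = bQ * C * of_nat n * bP * of_nat n"
  have Jb: "norm_bound (?J ^\<^sub>m r k) C'" for k
  proof -
    have Ak: "A ^\<^sub>m r k \<in> carrier_mat n n" using A by simp
    have "norm_bound (Q * A ^\<^sub>m r k * P) C'"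
      unfolding C'_def using norm_bound_mult[OF mult_carrier_mat[OF Q Ak] P norm_bound_mult[OF Q Ak bQ b] bP] .
    then show ?thesis unfolding Jpow .
  qed
  have blk: "norm ((jordan_block m a ^\<^sub>m r k) $$ (i,j)) \<le> C'"
    if ma: "(m,a) \<in> set n_as" and ij: "i < m" "j < m" for m a i j k
  proof -
    have "jordan_block m a ^\<^sub>m r k \<in> set (map (\<lambda>(n,a). jordan_block n a ^\<^sub>m r k) n_as)"
      using ma by force
    moreover have "i < dim_row (jordan_block m a ^\<^sub>m r k)" "j < dim_col (jordan_block m a ^\<^sub>m r k)"
      using ij jordan_block_pow_dim by auto
    ultimately obtain i' j' where
      "i' < dim_row (?J ^\<^sub>m r k)" "j' < dim_col (?J ^\<^sub>m r k)"
      "(?J ^\<^sub>m r k) $$ (i',j') = (jordan_block m a ^\<^sub>m r k) $$ (i,j)"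
      unfolding jordan_matrix_pow by (metis diag_block_entry)
    with norm_bound_entry[OF Jb] show ?thesis by metis
  qed
  have le1: "norm a \<le> 1" if ma: "(m,a) \<in> set n_as" and m: "m > 0" for m a
  proof (rule ccontr)
    assume "\<not> norm a \<le> 1"
    then have a1: "norm a > 1" by simp
    obtain k where k: "C' < norm a ^ k" using real_arch_pow[OF a1] by blast
    have "norm a ^ k \<le> norm a ^ r k" using a1 seq_suble[OF r] by (intro power_increasing) auto
    moreover have "norm ((jordan_block m a ^\<^sub>m r k) $$ (0,0)) \<le> C'" using blk[OF ma m m] .
    moreover have "(jordan_block m a ^\<^sub>m r k) $$ (0,0) = a ^ r k" using m by (simp add: jordan_block_pow)
    ultimately show False using k by (simp add: norm_power)
  qed
  have size1: "m \<le> 1" if ma: "(m,a) \<in> set n_as" and a: "norm a = 1" for m a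
  proof (rule ccontr)
    assume "\<not> m \<le> 1"
    then have m: "0 < m" "1 < m" by auto
    obtain k where k: "C' < real k" using reals_Archimedean2 by blast
    have "norm ((jordan_block m a ^\<^sub>m r k) $$ (0,1)) \<le> C'" using blk[OF ma m] .
    moreover have "(jordan_block m a ^\<^sub>m r k) $$ (0,1) = of_nat (r k) * a ^ (r k - 1)"
      using m by (simp add: jordan_block_pow)
    moreover have "k \<le> r k" using seq_suble[OF r] .
    ultimately show False using k a by (simp add: norm_mult norm_power)
  qed
  have "\<exists>c1 c2. \<forall>k. norm_bound (A ^\<^sub>m k) (c1 + c2 * of_nat k ^ (1 - 1))"
    by (rule jordan_nf_matrix_poly_bound[OF A _ _ jnf]) (use le1 size1 in force)+
  then obtain c1 c2 where "\<And>k. norm_bound (A ^\<^sub>m k) (c1 + c2 * of_nat k ^ (1 - 1))" by blast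
  then show ?thesis by auto
qed



definition idx :: "nat \<Rightarrow> 'm::finite" where
  "idx = (SOME h. bij_betw h {0..<CARD('m)} (UNIV::'m set))"

lemma idx_bij: "bij_betw (idx::nat\<Rightarrow>'m::finite) {0..<CARD('m)} UNIV"
proof -
  obtain h :: "nat \<Rightarrow> 'm" where "bij_betw h {0..<card (UNIV::'m set)} (UNIV::'m set)"
    using ex_bij_betw_nat_finite[of "UNIV::'m set"] by auto
  then show ?thesis unfolding idx_def by (rule someI[where P="\<lambda>h. bij_betw h {0..<CARD('m)} (UNIV::'m set)"])
qed

definition to_jmat :: "complex^'m^'m \<Rightarrow> complex mat" where
  "to_jmat X = Matrix.mat CARD('m) CARD('m) (\<lambda>(i,j). vec_nth (vec_nth X (idx i)) (idx j))"

lemma to_jmat_dim[simp]: "dim_row (to_jmat (X::complex^'m^'m)) = CARD('m)" "dim_col (to_jmat X) = CARD('m)"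
  "to_jmat X \<in> carrier_mat CARD('m) CARD('m)"
  by (auto simp: to_jmat_def)

lemma to_jmat_index[simp]: "i < CARD('m) \<Longrightarrow> j < CARD('m) \<Longrightarrow>
  to_jmat (X::complex^'m^'m) $$ (i,j) = vec_nth (vec_nth X (idx i)) (idx j)"
  by (simp add: to_jmat_def)

lemma to_jmat_mult: "to_jmat ((X::complex^'m^'m) ** Y) = to_jmat X * to_jmat Y"
proof (rule eq_matI)
  fix i j assume ij: "i < dim_row (to_jmat X * to_jmat Y)" "j < dim_col (to_jmat X * to_jmat Y)"
  then have i: "i < CARD('m)" and j: "j < CARD('m)" by auto
  have "(to_jmat X * to_jmat Y) $$ (i,j) = (\<Sum>k\<in>{0..<CARD('m)}.
       vec_nth (vec_nth X (idx i)) (idx k) * vec_nth (vec_nth Y (idx k)) (idx j))"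
    using i j by (simp add: scalar_prod_def)
  also have "\<dots> = (\<Sum>k\<in>UNIV. vec_nth (vec_nth X (idx i)) k * vec_nth (vec_nth Y k) (idx j))"
    by (rule sum.reindex_bij_betw[OF idx_bij])
  also have "\<dots> = to_jmat (X ** Y) $$ (i,j)"
    using i j by (simp add: matrix_matrix_mult_def)
  finally show "to_jmat (X ** Y) $$ (i,j) = (to_jmat X * to_jmat Y) $$ (i,j)" by simp
qed auto

lemma to_jmat_one: "to_jmat (Finite_Cartesian_Product.mat 1 :: complex^'m^'m) = 1\<^sub>m CARD('m)"
proof (rule eq_matI)
  fix i j assume ij: "i < dim_row (1\<^sub>m CARD('m))" "j < dim_col (1\<^sub>m CARD('m))"
  then have i: "i < CARD('m)" and j: "j < CARD('m)" by auto
  have "(idx i :: 'm) = idx j \<longleftrightarrow> i = j"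
    using idx_bij[where 'm='m] i j unfolding bij_betw_def inj_on_def by auto
  then show "to_jmat (Finite_Cartesian_Product.mat 1 :: complex^'m^'m) $$ (i,j) = 1\<^sub>m CARD('m) $$ (i,j)"
    using i j by (simp add: Finite_Cartesian_Product.mat_def)
qed auto

lemma to_jmat_pow: "to_jmat (matpow (A::complex^'m^'m) k) = to_jmat A ^\<^sub>m k"
  by (induct k) (simp_all add: to_jmat_one to_jmat_mult)

lemma norm_vec_le_sum: "norm (x::'a::real_normed_vector^'n) \<le> (\<Sum>i\<in>UNIV. norm (vec_nth x i))"
  by (simp add: norm_vec_def L2_set_le_sum)

lemma pow_bounded:
  fixes A :: "complex^'m^'m"
  assumes "limit_points_pow A \<noteq> {}"
  shows "\<exists>B. \<forall>n. norm (matpow A n) \<le> B"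
proof -
  from assms obtain L r where r: "strict_mono r" "(\<lambda>k. matpow A (r k)) \<longlonglongrightarrow> L"
    unfolding limit_points_pow_def by blast
  from convergent_imp_Bseq[OF convergentI[OF r(2)]] obtain K where K: "\<And>k. norm (matpow A (r k)) \<le> K"
    unfolding Bseq_def by blast
  have entry: "norm (vec_nth (vec_nth X a) b) \<le> norm X" for X :: "complex^'m^'m" and a b
    using Finite_Cartesian_Product.norm_nth_le[of "vec_nth X a" b] Finite_Cartesian_Product.norm_nth_le[of X a]
    by linarith
  have "norm_bound (to_jmat A ^\<^sub>m r k) K" for k
  proof (unfold norm_bound_def, intro allI impI)
    fix i j assume "i < dim_row (to_jmat A ^\<^sub>m r k)" "j < dim_col (to_jmat A ^\<^sub>m r k)"
    then have ij: "i < CARD('m)" "j < CARD('m)" by (auto split: if_splits)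
    have "norm (vec_nth (vec_nth (matpow A (r k)) (idx i)) (idx j)) \<le> K"
      using entry[of "matpow A (r k)"] K[of k] by (meson order.trans)
    then show "norm ((to_jmat A ^\<^sub>m r k) $$ (i,j)) \<le> K"
      unfolding to_jmat_pow[symmetric] using ij by simp
  qed
  from jnf_pow_bounded[OF to_jmat_dim(3) r(1) this] obtain c
    where c: "\<And>k. norm_bound (to_jmat A ^\<^sub>m k) c" by blast
  have ent: "norm (vec_nth (vec_nth (matpow A k) a) b) \<le> c" for k a b
  proof -
    have "a \<in> idx ` {0..<CARD('m)}" using idx_bij[where 'm='m] unfolding bij_betw_def by auto
    then obtain i where i: "i < CARD('m)" "idx i = a" by auto
    have "b \<in> idx ` {0..<CARD('m)}" using idx_bij[where 'm='m] unfolding bij_betw_def by auto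
    then obtain j where j: "j < CARD('m)" "idx j = b" by auto
    have "norm (to_jmat (matpow A k) $$ (i,j)) \<le> c"
      using c[of k] i j unfolding to_jmat_pow[symmetric] norm_bound_def by (simp del: to_jmat_index)
    then show ?thesis using i j by simp
  qed
  have "norm (matpow A k) \<le> of_nat CARD('m) * (of_nat CARD('m) * c)" for k
  proof -
    have "norm (matpow A k) \<le> (\<Sum>a\<in>UNIV. norm (vec_nth (matpow A k) a))" by (rule norm_vec_le_sum)
    also have "\<dots> \<le> (\<Sum>a\<in>(UNIV::'m set). \<Sum>b\<in>(UNIV::'m set). norm (vec_nth (vec_nth (matpow A k) a) b))"
      by (intro sum_mono norm_vec_le_sum)
    also have "\<dots> \<le> (\<Sum>a\<in>(UNIV::'m set). \<Sum>b\<in>(UNIV::'m set). c)"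
      by (intro sum_mono ent)
    finally show ?thesis by simp
  qed
  then show ?thesis by blast
qed



lemma matpow_add: "matpow A (m+n) = matpow A m ** matpow A n"
  by (induct n) (simp_all add: matrix_mul_rid matrix_mul_assoc)

lemma matpow_comm: "matpow A m ** matpow A n = matpow A n ** matpow A m"
  by (metis matpow_add add.commute)

lemma tendsto_mm:
  fixes f :: "'b \<Rightarrow> 'a::real_normed_field^'n^'m" and g :: "'b \<Rightarrow> 'a^'k^'n"
  assumes "(f \<longlongrightarrow> a) F" "(g \<longlongrightarrow> b) F"
  shows "((\<lambda>x. f x ** g x) \<longlongrightarrow> a ** b) F"
  unfolding matrix_matrix_mult_def using assms by (intro tendsto_intros)

fun ssq :: "(nat \<Rightarrow> nat) \<Rightarrow> nat \<Rightarrow> nat" where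
  "ssq f 0 = 0"
| "ssq f (Suc k) = (LEAST j. j > ssq f k \<and> f j > f (ssq f k))"

lemma sub_strict:
  fixes f :: "nat \<Rightarrow> nat"
  assumes "filterlim f at_top sequentially"
  shows "\<exists>\<sigma>::nat\<Rightarrow>nat. strict_mono \<sigma> \<and> strict_mono (f \<circ> \<sigma>)"
proof -
  have ex: "\<exists>j. j > i \<and> f j > f i" for i
  proof -
    from assms have "eventually (\<lambda>j. f j \<ge> Suc (f i)) sequentially"
      by (simp add: filterlim_at_top)
    then obtain N where N: "\<And>j. j \<ge> N \<Longrightarrow> f j \<ge> Suc (f i)"
      by (auto simp: eventually_sequentially)
    show ?thesis using N[of "max N (Suc i)"] by (intro exI[of _ "max N (Suc i)"]) auto
  qed
  have step: "ssq f (Suc k) > ssq f k \<and> f (ssq f (Suc k)) > f (ssq f k)" for k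
    using LeastI_ex[OF ex[of "ssq f k"]] by simp
  have "strict_mono (ssq f)" "strict_mono (f \<circ> ssq f)"
    unfolding strict_mono_Suc_iff using step by auto
  then show ?thesis by blast
qed

lemma ge_filterlim: "(\<And>n. n \<le> g n) \<Longrightarrow> filterlim (g::nat\<Rightarrow>nat) at_top sequentially"
  unfolding filterlim_at_top eventually_sequentially by (meson le_trans)

lemma lim_in:
  fixes f :: "nat \<Rightarrow> nat"
  assumes "filterlim f at_top sequentially" "(\<lambda>k. matpow A (f k)) \<longlonglongrightarrow> L"
  shows "L \<in> limit_points_pow A"
proof -
  obtain \<sigma> :: "nat \<Rightarrow> nat" where s: "strict_mono \<sigma>" "strict_mono (f \<circ> \<sigma>)" using sub_strict[OF assms(1)] by blast
  have "((\<lambda>k. matpow A (f k)) \<circ> \<sigma>) \<longlonglongrightarrow> L" using LIMSEQ_subseq_LIMSEQ[OF assms(2) s(1)] .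
  then show ?thesis unfolding limit_points_pow_def using s(2) by (auto simp: o_def intro!: exI[of _ "f \<circ> \<sigma>"])
qed

lemma conv_sub:
  fixes A :: "complex^'m^'m" and f :: "nat \<Rightarrow> nat"
  assumes bnd: "\<And>n. norm (matpow A n) \<le> B" and f: "filterlim f at_top sequentially"
  shows "\<exists>\<sigma> L. strict_mono \<sigma> \<and> (\<lambda>k. matpow A (f (\<sigma> k))) \<longlonglongrightarrow> L \<and> L \<in> limit_points_pow A"
proof -
  have "bounded (range (\<lambda>k. matpow A (f k)))" using bnd by (auto intro!: boundedI)
  then obtain l r where r: "strict_mono r" "((\<lambda>k. matpow A (f k)) \<circ> r) \<longlonglongrightarrow> l"
    using bounded_imp_convergent_subsequence by blast
  have "filterlim (f \<circ> r) at_top sequentially"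
    using filterlim_compose[OF f filterlim_subseq[OF r(1)]] by (simp add: o_def)
  with r have "l \<in> limit_points_pow A" by (intro lim_in[of "f \<circ> r"]) (auto simp: o_def)
  with r show ?thesis by (auto simp: o_def)
qed

theorem mainTheorem13:
  fixes A :: "complex^'m^'m"
  assumes "limit_points_pow A \<noteq> {}"
  shows "compact (limit_points_pow A) \<and>
         (\<exists>E. comm_group \<lparr>carrier = limit_points_pow A, mult = (\<lambda>X Y. X ** Y), one = E\<rparr>)"
proof -
  let ?G = "limit_points_pow A"
  obtain B where bnd: "\<And>n. norm (matpow A n) \<le> B" using pow_bounded[OF assms] by blast
  have Gbnd: "norm L \<le> B" if "L \<in> ?G" for L
  proof -
    from that obtain r where r: "strict_mono r" "(\<lambda>k. matpow A (r k)) \<longlonglongrightarrow> L"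
      unfolding limit_points_pow_def by blast
    show ?thesis using tendsto_norm[OF r(2)] bnd by (intro LIMSEQ_le_const2) auto
  qed
  have closed: "closed ?G"
    unfolding closed_sequential_limits
  proof (intro allI impI, elim conjE)
    fix x l assume x: "\<forall>n. x n \<in> ?G" and xl: "x \<longlonglongrightarrow> l"
    have "\<exists>m. m \<ge> n \<and> dist (matpow A m) (x n) < inverse (Suc n)" for n
    proof -
      from x obtain r where r: "strict_mono r" "(\<lambda>k. matpow A (r k)) \<longlonglongrightarrow> x n"
        unfolding limit_points_pow_def by blast
      have "eventually (\<lambda>k. dist (matpow A (r k)) (x n) < inverse (Suc n)) sequentially"
        using r(2) by (intro tendstoD) auto
      moreover have "eventually (\<lambda>k. k \<ge> n) sequentially" by (rule eventually_ge_at_top)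
      ultimately have "eventually (\<lambda>k. dist (matpow A (r k)) (x n) < inverse (Suc n) \<and> k \<ge> n) sequentially"
        by (rule eventually_conj)
      then obtain N where "\<forall>k\<ge>N. dist (matpow A (r k)) (x n) < inverse (Suc n) \<and> k \<ge> n"
        unfolding eventually_sequentially by blast
      then obtain k where "dist (matpow A (r k)) (x n) < inverse (Suc n)" "k \<ge> n" by blast
      moreover have "r k \<ge> k" using r(1) by (rule seq_suble)
      ultimately show ?thesis by (intro exI[of _ "r k"]) auto
    qed
    then obtain g where g: "\<And>n. g n \<ge> n" "\<And>n. dist (matpow A (g n)) (x n) < inverse (Suc n)"
      by metis
    have d0: "(\<lambda>n. dist (matpow A (g n)) (x n)) \<longlonglongrightarrow> 0"
      by (rule tendsto_sandwich[of "\<lambda>_. 0" _ _ "\<lambda>n. inverse (real (Suc n))"])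
         (use g(2) LIMSEQ_inverse_real_of_nat in \<open>auto intro!: always_eventually less_imp_le\<close>)
    have "(\<lambda>n. matpow A (g n)) \<longlonglongrightarrow> l"
    proof (rule Lim_transform[OF xl])
      show "(\<lambda>n. matpow A (g n) - x n) \<longlonglongrightarrow> 0"
        using d0 by (simp add: dist_norm tendsto_norm_zero_iff)
    qed
    then show "l \<in> ?G" using lim_in ge_filterlim g(1) by blast
  qed
  have compact: "compact ?G"
    using closed Gbnd by (auto simp: compact_eq_bounded_closed intro!: boundedI)
  have mult: "L ** M \<in> ?G" if "L \<in> ?G" "M \<in> ?G" for L M
  proof -
    from that obtain r s where r: "strict_mono r" "(\<lambda>k. matpow A (r k)) \<longlonglongrightarrow> L"
      and s: "strict_mono s" "(\<lambda>k. matpow A (s k)) \<longlonglongrightarrow> M"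
      unfolding limit_points_pow_def by blast
    have "(\<lambda>k. matpow A (r k + s k)) \<longlonglongrightarrow> L ** M"
      unfolding matpow_add by (rule tendsto_mm[OF r(2) s(2)])
    moreover have "filterlim (\<lambda>k. r k + s k) at_top sequentially"
    proof (rule ge_filterlim)
      fix n show "n \<le> r n + s n" using seq_suble[OF r(1), of n] by linarith
    qed
    ultimately show ?thesis using lim_in by blast
  qed
  have comm: "L ** M = M ** L" if "L \<in> ?G" "M \<in> ?G" for L M
  proof -
    from that obtain r s where r: "strict_mono r" "(\<lambda>k. matpow A (r k)) \<longlonglongrightarrow> L"
      and s: "strict_mono s" "(\<lambda>k. matpow A (s k)) \<longlonglongrightarrow> M"
      unfolding limit_points_pow_def by blast
    have "(\<lambda>k. matpow A (r k) ** matpow A (s k)) \<longlonglongrightarrow> L ** M" by (rule tendsto_mm[OF r(2) s(2)])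
    moreover have "(\<lambda>k. matpow A (r k) ** matpow A (s k)) \<longlonglongrightarrow> M ** L"
      unfolding matpow_comm[of A "r _"] by (rule tendsto_mm[OF s(2) r(2)])
    ultimately show ?thesis by (rule LIMSEQ_unique)
  qed
  have div: "\<exists>N\<in>?G. L ** N = M" if "L \<in> ?G" "M \<in> ?G" for L M
  proof -
    from that obtain r s where r: "strict_mono r" "(\<lambda>k. matpow A (r k)) \<longlonglongrightarrow> L"
      and s: "strict_mono s" "(\<lambda>k. matpow A (s k)) \<longlonglongrightarrow> M"
      unfolding limit_points_pow_def by blast
    define \<tau> where "\<tau> j = max j (2 * r j)" for j
    define f where "f j = s (\<tau> j) - r j" for j
    have sge: "s (\<tau> j) \<ge> 2 * r j" for j
      using seq_suble[OF s(1), of "\<tau> j"] unfolding \<tau>_def by linarith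
    have fge: "f j \<ge> j" for j
      using sge[of j] seq_suble[OF r(1), of j] unfolding f_def by linarith
    have taul: "filterlim \<tau> at_top sequentially" by (rule ge_filterlim) (simp add: \<tau>_def)
    obtain \<sigma> N where sg: "strict_mono \<sigma>" "(\<lambda>k. matpow A (f (\<sigma> k))) \<longlonglongrightarrow> N" "N \<in> ?G"
      using conv_sub[OF bnd ge_filterlim[OF fge]] by blast
    have "(\<lambda>k. matpow A (r (\<sigma> k)) ** matpow A (f (\<sigma> k))) \<longlonglongrightarrow> L ** N"
      using tendsto_mm[OF LIMSEQ_subseq_LIMSEQ[OF r(2) sg(1)] sg(2)] by (simp add: o_def)
    moreover have "(\<lambda>k. matpow A (r (\<sigma> k)) ** matpow A (f (\<sigma> k))) = (\<lambda>k. matpow A (s (\<tau> (\<sigma> k))))"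
    proof (intro ext)
      fix k
      have "r (\<sigma> k) + f (\<sigma> k) = s (\<tau> (\<sigma> k))" using sge[of "\<sigma> k"] unfolding f_def by arith
      then show "matpow A (r (\<sigma> k)) ** matpow A (f (\<sigma> k)) = matpow A (s (\<tau> (\<sigma> k)))"
        by (metis matpow_add)
    qed
    moreover have "(\<lambda>k. matpow A (s (\<tau> (\<sigma> k)))) \<longlonglongrightarrow> M"
      using filterlim_compose[OF s(2) filterlim_compose[OF taul filterlim_subseq[OF sg(1)]]]
      by (simp add: o_def)
    ultimately have "L ** N = M" using LIMSEQ_unique by metis
    with sg(3) show ?thesis by blast
  qed
  obtain L0 where L0: "L0 \<in> ?G" using assms by blast
  obtain E where E: "E \<in> ?G" "L0 ** E = L0" using div[OF L0 L0] by blast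
  have Eone: "E ** M = M" if MG: "M \<in> ?G" for M
  proof -
    obtain N where N: "N \<in> ?G" "L0 ** N = M" using div[OF L0 MG] by blast
    have "E ** M = (E ** L0) ** N" using N(2) matrix_mul_assoc by metis
    also have "E ** L0 = L0" using comm[OF E(1) L0] E(2) by simp
    finally show ?thesis using N by simp
  qed
  have "comm_group \<lparr>carrier = ?G, mult = (\<lambda>X Y. X ** Y), one = E\<rparr>"
  proof (rule comm_groupI, goal_cases)
    case (1 x y) then show ?case using mult by simp
  next
    case 2 then show ?case using E by simp
  next
    case (3 x y z) then show ?case by (simp add: matrix_mul_assoc)
  next
    case (4 x y) then show ?case using comm by simp
  next
    case (5 x) then show ?case using Eone by simp
  next
    case (6 x) then show ?case using div[of x E] E comm by fastforce
  qed
  with compact show ?thesis by blast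
qed

end
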